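(* Let $\mathcal X$ be a Polish space with metric and $\sigma$-finite reference measure, $\pi,\pi_Y$ probability measures with densities, $w=\pi/\pi_Y$ with $|w|_\infty<\infty$, and let $\{Y_n\}_{n\ge0}$ be an $\mathcal X$-valued process (started at $Y_0=y_0$). Assume: (i) there is a finite constant $C$ such that for every measurable $f$ with $|f|_\infty\le1$ and all $x>0$, \[ \sup_n\mathbb P\Big(\Big|\frac1{\sqrt n}\sum_{j=1}^n(f(Y_j)-\pi_Y(f))\Big|>x\Big)\le C\exp\Big(-\frac{x^2}{C\sigma^2(f)}\Big),\quad\sigma^2(f)=\int f^2\,\mathrm d\pi_Y; \] (ii) $w$ is continuous and $\sup_{x\in\mathcal X}\phi(x)/w^2(x)<\infty$, where $\phi(x)=\pi_Y(\{z:w(z)\le w(x)\})$. Let $g:\mathcal X\to\mathbb R$ be continuous with $|g|_\infty\le1$. Define $\alpha(x,z)=1\wedge\frac{w(z)}{w(x)}$, $H_g(x,z)=\alpha(x,z)(g(z)-g(x))$, the class $\mathcal F_g=\{z\mapsto H_g(x,z):x\in\mathcal X\}$, and the empirical process $\mathbb G_n(h)=\frac1{\sqrt n}\sum_{j=1}^n(h(Y_j)-\pi_Y(h))$, $h\in\mathcal F_g$. Then \[ \mathbb E\Big(\sup_{h\in\mathcal F_g}|\mathbb G_n(h)|\Big)\le C \] for a constant $C$ that does not depend on $n$.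
   Context: $|f|_\infty=\sup_x|f(x)|$; $\pi_Y(h)=\int h\,\mathrm d\pi_Y$. *)

theory Defs
  imports "HOL-Probability.Probability"
begin

text \<open>Importance weight w = pi / pi_Y, given via densities p (of pi) and q (of pi_Y).\<close>
definition weight :: "('a \<Rightarrow> real) \<Rightarrow> ('a \<Rightarrow> real) \<Rightarrow> 'a \<Rightarrow> real" where
  "weight p q x = p x / q x"

definition acc_alpha :: "('a \<Rightarrow> real) \<Rightarrow> 'a \<Rightarrow> 'a \<Rightarrow> real" where
  "acc_alpha w x z = min 1 (w z / w x)"

definition H_g :: "('a \<Rightarrow> real) \<Rightarrow> ('a \<Rightarrow> real) \<Rightarrow> 'a \<Rightarrow> 'a \<Rightarrow> real" where
  "H_g w g x z = acc_alpha w x z * (g z - g x)"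

definition emp_proc :: "'a measure \<Rightarrow> (nat \<Rightarrow> 'o \<Rightarrow> 'a) \<Rightarrow> nat \<Rightarrow> ('a \<Rightarrow> real) \<Rightarrow> 'o \<Rightarrow> real" where
  "emp_proc piY Y n h \<omega> = (1 / sqrt (real n)) * (\<Sum>j=1..n. (h (Y j \<omega>) - integral\<^sup>L piY h))"

end

theory Submission
  imports Defs
begin

lemma sq_le_pow: "(real m + 2)^2 \<le> 2^(m+3)"
proof (induction m)
  case 0 then show ?case by simp
next
  case (Suc m)
  show ?case
  proof (cases "m = 0")
    case True then show ?thesis by simp
  next
    case False
    then have x1: "1 \<le> real m" by simp
    then have "real m \<le> real m * real m" by (simp add: mult_le_cancel_left1)
    then have "1 \<le> real m * real m + real m * 2" using x1 by linarith
    then have "(real (Suc m) + 2)^2 \<le> 2 * (real m + 2)^2"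
      by (simp add: power2_eq_square algebra_simps)
    also have "\<dots> \<le> 2 * 2^(m+3)" using Suc by simp
    also have "\<dots> = 2^(Suc m + 3)" by (simp add: power_add)
    finally show ?thesis .
  qed
qed

lemma exp_term_le: "(real m + 2)^2 * exp (-(2*(real m+1))) \<le> 2 * (1/2)^m"
proof -
  have e: "exp (-1::real) \<le> 1/2"
  proof -
    have "2 \<le> exp (1::real)" using exp_ge_add_one_self[of 1] by simp
    then show ?thesis by (simp add: exp_minus field_simps)
  qed
  have "exp (-(2*(real m+1))) = exp (real (2*m+2) * (-1))"
    by (simp add: algebra_simps)
  also have "\<dots> = exp (-1) ^ (2*m+2)" by (rule exp_of_nat_mult)
  finally have "exp (-(2*(real m+1))) = exp (-1) ^ (2*m+2)" .
  also have "\<dots> \<le> (1/2)^(2*m+2)" by (rule power_mono[OF e]) simp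
  finally have a: "exp (-(2*(real m+1))) \<le> (1/2)^(2*m+2)" .
  have "(real m + 2)^2 * exp (-(2*(real m+1))) \<le> 2^(m+3) * (1/2)^(2*m+2)"
    by (rule mult_mono[OF sq_le_pow a]) auto
  also have "\<dots> = 2 * (1/2)^m"
    by (simp add: power_add power_mult field_simps power2_eq_square)
  finally show ?thesis .
qed


lemma term_le_suminf: "(f::nat\<Rightarrow>ennreal) N \<le> suminf f"
  using sum_le_suminf[OF summableI, of "{N}" f] by simp

lemma moment4:
  assumes P: "prob_space M" and Xm: "X \<in> borel_measurable M" and C1: "1 \<le> C1" and sp: "\<sigma> > 0"
    and tl: "\<And>x. x > 0 \<Longrightarrow> measure M {\<omega>\<in>space M. \<bar>X \<omega>\<bar> > x} \<le> C1 * exp (-(x\<^sup>2/(C1*\<sigma>)))"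
  shows "(\<integral>\<^sup>+\<omega>. ennreal ((X \<omega>)^4) \<partial>M) \<le> ennreal ((C1*\<sigma>)\<^sup>2 * (4 + 16*C1))"
proof -
  interpret prob_space M by (rule P)
  define c where "c = C1*\<sigma>"
  have cpos: "c > 0" using C1 sp by (simp add: c_def)
  define A where "A m = {\<omega>\<in>space M. \<bar>X \<omega>\<bar> > sqrt (2*(real m+1)*c)}" for m
  have Am: "A m \<in> sets M" for m unfolding A_def using Xm by measurable
  have pw: "ennreal ((X \<omega>)^4) \<le> ennreal (4*c\<^sup>2) + (\<Sum>m. ennreal (4*c\<^sup>2*(real m+2)\<^sup>2) * indicator (A m) \<omega>)"
    if om: "\<omega> \<in> space M" for \<omega>
  proof -
    define t where "t = (X \<omega>)\<^sup>2 / c"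
    have t0: "t \<ge> 0" using cpos by (simp add: t_def)
    have X4: "(X \<omega>)^4 = c\<^sup>2 * t\<^sup>2" using cpos by (simp add: t_def power2_eq_square field_simps eval_nat_numeral)
    show ?thesis
    proof (cases "t \<le> 2")
      case True
      have "t\<^sup>2 \<le> 2\<^sup>2" by (rule power_mono[OF True t0])
      then have "(X \<omega>)^4 \<le> 4*c\<^sup>2" unfolding X4 using cpos by simp
      then have "ennreal ((X \<omega>)^4) \<le> ennreal (4*c\<^sup>2)" by (rule ennreal_leI)
      then show ?thesis by (rule order_trans) simp
    next
      case False
      define N where "N = nat (\<lceil>t/2\<rceil>) - 2"
      have c1: "real N + 1 < t/2" and c2: "t/2 \<le> real N + 2" using False
        by (simp_all add: N_def; linarith)+
      have "sqrt (2*(real N+1)*c) < sqrt ((X \<omega>)\<^sup>2)"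
        apply (rule real_sqrt_less_mono) using c1 cpos by (simp add: t_def field_simps)
      then have inA: "\<omega> \<in> A N" using om by (simp add: A_def)
      have "t\<^sup>2 \<le> (2*(real N+2))\<^sup>2" by (rule power_mono) (use c2 t0 in auto)
      also have "\<dots> = 4*(real N+2)\<^sup>2" by (simp add: power2_eq_square algebra_simps)
      finally have "t\<^sup>2 \<le> 4*(real N+2)\<^sup>2" .
      then have "(X \<omega>)^4 \<le> 4*c\<^sup>2*(real N+2)\<^sup>2" unfolding X4 using cpos
        by (simp add: power_mult_distrib mult_left_mono)
      then have "ennreal ((X \<omega>)^4) \<le> ennreal (4*c\<^sup>2*(real N+2)\<^sup>2) * indicator (A N) \<omega>"
        using inA by (simp add: ennreal_leI)
      also have "\<dots> \<le> (\<Sum>m. ennreal (4*c\<^sup>2*(real m+2)\<^sup>2) * indicator (A m) \<omega>)"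
        by (rule term_le_suminf)
      finally show ?thesis by (rule order_trans) simp
    qed
  qed
  have "(\<integral>\<^sup>+\<omega>. ennreal ((X \<omega>)^4) \<partial>M) \<le>
      (\<integral>\<^sup>+\<omega>. ennreal (4*c\<^sup>2) + (\<Sum>m. ennreal (4*c\<^sup>2*(real m+2)\<^sup>2) * indicator (A m) \<omega>) \<partial>M)"
    by (rule nn_integral_mono) (rule pw)
  also have "\<dots> = (\<integral>\<^sup>+\<omega>. ennreal (4*c\<^sup>2) \<partial>M) + (\<integral>\<^sup>+\<omega>. (\<Sum>m. ennreal (4*c\<^sup>2*(real m+2)\<^sup>2) * indicator (A m) \<omega>) \<partial>M)"
    by (rule nn_integral_add) (use Am in auto)
  also have "(\<integral>\<^sup>+\<omega>. (\<Sum>m. ennreal (4*c\<^sup>2*(real m+2)\<^sup>2) * indicator (A m) \<omega>) \<partial>M)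
      = (\<Sum>m. \<integral>\<^sup>+\<omega>. ennreal (4*c\<^sup>2*(real m+2)\<^sup>2) * indicator (A m) \<omega> \<partial>M)"
    by (rule nn_integral_suminf) (use Am in auto)
  also have "\<dots> = (\<Sum>m. ennreal (4*c\<^sup>2*(real m+2)\<^sup>2) * emeasure M (A m))"
    using Am by (simp add: nn_integral_cmult_indicator)
  also have "\<dots> \<le> (\<Sum>m. ennreal (8*c\<^sup>2*C1*(1/2)^m))"
  proof (rule suminf_le[OF _ summableI summableI])
    fix m
    have "measure M (A m) \<le> C1 * exp (-((sqrt (2*(real m+1)*c))\<^sup>2/(C1*\<sigma>)))"
      unfolding A_def by (rule tl) (use cpos in simp)
    also have "\<dots> = C1 * exp (-(2*(real m+1)))" using cpos sp by (simp add: c_def)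
    finally have mA: "measure M (A m) \<le> C1 * exp (-(2*(real m+1)))" .
    have "ennreal (4*c\<^sup>2*(real m+2)\<^sup>2) * emeasure M (A m) = ennreal (4*c\<^sup>2*(real m+2)\<^sup>2 * measure M (A m))"
      by (simp add: emeasure_eq_measure ennreal_mult)
    also have "\<dots> \<le> ennreal (8*c\<^sup>2*C1*(1/2)^m)"
    proof (rule ennreal_leI)
      have "4*c\<^sup>2*(real m+2)\<^sup>2 * measure M (A m) \<le> 4*c\<^sup>2*(real m+2)\<^sup>2 * (C1 * exp (-(2*(real m+1))))"
        by (rule mult_left_mono[OF mA]) simp
      also have "\<dots> = 4*c\<^sup>2*C1 * ((real m+2)\<^sup>2 * exp (-(2*(real m+1))))" by simp
      also have "\<dots> \<le> 4*c\<^sup>2*C1 * (2*(1/2)^m)"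
        by (rule mult_left_mono[OF exp_term_le]) (use C1 in simp)
      finally show "4*c\<^sup>2*(real m+2)\<^sup>2 * measure M (A m) \<le> 8*c\<^sup>2*C1*(1/2)^m" by simp
    qed
    finally show "ennreal (4*c\<^sup>2*(real m+2)\<^sup>2) * emeasure M (A m) \<le> ennreal (8*c\<^sup>2*C1*(1/2)^m)" .
  qed
  also have "(\<Sum>m. ennreal (8*c\<^sup>2*C1*(1/2)^m)) = ennreal (16*c\<^sup>2*C1)"
  proof (rule suminf_ennreal_eq)
    show "0 \<le> 8*c\<^sup>2*C1*(1/2)^m" for m using C1 by simp
    have "(\<lambda>m. (1/2::real)^m) sums (1/(1-1/2))" by (rule geometric_sums) simp
    then have "(\<lambda>m. 8*c\<^sup>2*C1*(1/2::real)^m) sums (8*c\<^sup>2*C1*(1/(1-1/2)))" by (rule sums_mult)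
    then show "(\<lambda>m. 8*c\<^sup>2*C1*(1/2::real)^m) sums (16*c\<^sup>2*C1)" by (simp add: mult.assoc)
  qed
  also have "(\<integral>\<^sup>+\<omega>. ennreal (4*c\<^sup>2) \<partial>M) = ennreal (4*c\<^sup>2)" by (simp add: emeasure_space_1)
  finally have "(\<integral>\<^sup>+\<omega>. ennreal ((X \<omega>)^4) \<partial>M) \<le> ennreal (4*c\<^sup>2) + ennreal (16*c\<^sup>2*C1)" by simp
  also have "\<dots> = ennreal ((C1*\<sigma>)\<^sup>2 * (4 + 16*C1))"
    using C1 by (simp add: ennreal_plus[symmetric] c_def algebra_simps del: ennreal_plus)
  finally show ?thesis .
qed

locale chainset =
  fixes P :: "'a::topological_space measure" and M :: "'o measure" and Y :: "nat \<Rightarrow> 'o \<Rightarrow> 'a"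
    and w :: "'a \<Rightarrow> real" and C1 Bw :: real
  assumes P_prob: "prob_space P" and sets_P: "sets P = sets borel"
    and M_prob: "prob_space M" and Y_meas: "\<And>n. Y n \<in> measurable M borel"
    and w_meas: "w \<in> borel_measurable borel" and w_nonneg: "\<And>x. 0 \<le> w x" and w_le: "\<And>x. w x \<le> Bw"
    and C1: "1 \<le> C1"
    and tail: "\<And>f n x \<sigma>. f \<in> borel_measurable borel \<Longrightarrow> (\<forall>z. \<bar>f z\<bar> \<le> 1) \<Longrightarrow> x > 0 \<Longrightarrow> \<sigma> > 0
        \<Longrightarrow> (\<integral>z. (f z)\<^sup>2 \<partial>P) \<le> \<sigma>
        \<Longrightarrow> measure M {\<omega>\<in>space M. \<bar>emp_proc P Y n f \<omega>\<bar> > x} \<le> C1 * exp (-(x\<^sup>2/(C1*\<sigma>)))"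
begin

lemma measP: "f \<in> borel_measurable borel \<Longrightarrow> f \<in> borel_measurable P"
  by (subst measurable_cong_sets[OF sets_P refl])

lemma intP: assumes "f \<in> borel_measurable borel" "\<And>z. \<bar>f z\<bar> \<le> (B::real)" shows "integrable P f"
proof -
  interpret prob_space P by (rule P_prob)
  show ?thesis by (rule integrable_const_bound[of _ B]) (use assms measP in auto)
qed

lemma G_meas: "f \<in> borel_measurable borel \<Longrightarrow> (\<lambda>\<omega>. emp_proc P Y n f \<omega>) \<in> borel_measurable M"
proof -
  assume f: "f \<in> borel_measurable borel"
  have "(\<lambda>x. f (Y j x)) \<in> borel_measurable M" for j by (rule measurable_compose[OF Y_meas f])
  then show ?thesis unfolding emp_proc_def
    by (intro borel_measurable_times borel_measurable_const borel_measurable_sum borel_measurable_diff) auto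
qed

lemma G_lin:
  assumes "f \<in> borel_measurable borel" "\<And>z. \<bar>f z\<bar> \<le> B1" "g \<in> borel_measurable borel" "\<And>z. \<bar>g z\<bar> \<le> B2"
  shows "emp_proc P Y n (\<lambda>z. a * f z + b * g z) \<omega> = a * emp_proc P Y n f \<omega> + b * emp_proc P Y n g \<omega>"
proof -
  have i: "integral\<^sup>L P (\<lambda>z. a * f z + b * g z) = a * integral\<^sup>L P f + b * integral\<^sup>L P g"
    using intP[OF assms(1,2)] intP[OF assms(3,4)] by simp
  show ?thesis unfolding emp_proc_def i
    by (simp add: sum.distrib sum_distrib_left algebra_simps sum_subtractf)
qed

lemma G_diff:
  assumes "f \<in> borel_measurable borel" "\<And>z. \<bar>f z\<bar> \<le> B1" "g \<in> borel_measurable borel" "\<And>z. \<bar>g z\<bar> \<le> B2"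
  shows "emp_proc P Y n (\<lambda>z. f z - g z) \<omega> = emp_proc P Y n f \<omega> - emp_proc P Y n g \<omega>"
  using G_lin[OF assms, where a=1 and b="-1" and n=n and \<omega>=\<omega>] by simp

lemma G_brack:
  assumes n: "n > 0" and fm: "f \<in> borel_measurable borel" "\<And>z. \<bar>f z\<bar> \<le> B1"
    and bm: "b \<in> borel_measurable borel" "\<And>z. \<bar>b z\<bar> \<le> B2" and fb: "\<And>z. \<bar>f z\<bar> \<le> b z"
  shows "\<bar>emp_proc P Y n f \<omega>\<bar> \<le> emp_proc P Y n b \<omega> + 2 * sqrt n * integral\<^sup>L P b"
proof -
  have if1: "\<bar>integral\<^sup>L P f\<bar> \<le> integral\<^sup>L P b"
  proof -
    have "\<bar>integral\<^sup>L P f\<bar> \<le> integral\<^sup>L P (\<lambda>z. \<bar>f z\<bar>)" by (rule integral_abs_bound)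
    also have "\<dots> \<le> integral\<^sup>L P b"
      by (rule integral_mono) (use intP[OF fm] intP[OF bm] fb in auto)
    finally show ?thesis .
  qed
  have s: "sqrt (real n) > 0" using n by simp
  have "\<bar>\<Sum>j=1..n. (f (Y j \<omega>) - integral\<^sup>L P f)\<bar> \<le> (\<Sum>j=1..n. \<bar>f (Y j \<omega>) - integral\<^sup>L P f\<bar>)"
    by (rule sum_abs)
  also have "\<dots> \<le> (\<Sum>j=1..n. (b (Y j \<omega>) + integral\<^sup>L P b))"
  proof (rule sum_mono)
    fix j
    have "\<bar>f (Y j \<omega>)\<bar> \<le> b (Y j \<omega>)" by (rule fb)
    then show "\<bar>f (Y j \<omega>) - integral\<^sup>L P f\<bar> \<le> b (Y j \<omega>) + integral\<^sup>L P b" using if1 by linarith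
  qed
  also have "\<dots> = (\<Sum>j=1..n. (b (Y j \<omega>) - integral\<^sup>L P b)) + real n * (2 * integral\<^sup>L P b)"
    by (simp add: sum.distrib sum_subtractf algebra_simps)
  finally have A: "\<bar>\<Sum>j=1..n. (f (Y j \<omega>) - integral\<^sup>L P f)\<bar> \<le> (\<Sum>j=1..n. (b (Y j \<omega>) - integral\<^sup>L P b)) + real n * (2 * integral\<^sup>L P b)" .
  have "\<bar>emp_proc P Y n f \<omega>\<bar> = (1/sqrt n) * \<bar>\<Sum>j=1..n. (f (Y j \<omega>) - integral\<^sup>L P f)\<bar>"
    unfolding emp_proc_def using s by (simp add: abs_mult)
  also have "\<dots> \<le> (1/sqrt n) * ((\<Sum>j=1..n. (b (Y j \<omega>) - integral\<^sup>L P b)) + real n * (2 * integral\<^sup>L P b))"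
    by (rule mult_left_mono[OF A]) (use s in simp)
  also have "\<dots> = emp_proc P Y n b \<omega> + 2 * sqrt n * integral\<^sup>L P b"
  proof -
    have nn: "real n = sqrt n * sqrt n" by simp
    have e: "real n * x / sqrt n = sqrt n * x" for x
      using s by (subst nn) (simp add: field_simps)
    show ?thesis unfolding emp_proc_def by (simp add: algebra_simps e)
  qed
  finally show ?thesis .
qed

definition K0 where "K0 = C1\<^sup>2 * (4 + 16*C1)"

lemma K0_nonneg: "0 \<le> K0" using C1 unfolding K0_def by simp

lemma G4:
  assumes fm: "f \<in> borel_measurable borel" and fb: "\<And>z. \<bar>f z\<bar> \<le> 1" and sp: "\<sigma> > 0"
    and fs: "(\<integral>z. (f z)\<^sup>2 \<partial>P) \<le> \<sigma>"
  shows "(\<integral>\<^sup>+\<omega>. ennreal ((emp_proc P Y n f \<omega>)^4) \<partial>M) \<le> ennreal (K0 * \<sigma>\<^sup>2)"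
proof -
  have "(\<integral>\<^sup>+\<omega>. ennreal ((emp_proc P Y n f \<omega>)^4) \<partial>M) \<le> ennreal ((C1*\<sigma>)\<^sup>2 * (4 + 16*C1))"
    by (rule moment4[OF M_prob G_meas[OF fm] C1 sp]) (rule tail[OF fm _ _ sp fs], use fb in auto)
  also have "(C1*\<sigma>)\<^sup>2 * (4 + 16*C1) = K0 * \<sigma>\<^sup>2" unfolding K0_def by (simp add: power_mult_distrib)
  finally show ?thesis .
qed

lemma G4_sum:
  assumes fin: "finite I" and cI: "card I \<le> N" and fm: "\<And>i. i \<in> I \<Longrightarrow> f i \<in> borel_measurable borel"
    and fb: "\<And>i z. i \<in> I \<Longrightarrow> \<bar>f i z\<bar> \<le> 1" and sp: "\<sigma> > 0"
    and fs: "\<And>i. i \<in> I \<Longrightarrow> (\<integral>z. (f i z)\<^sup>2 \<partial>P) \<le> \<sigma>"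
  shows "(\<integral>\<^sup>+\<omega>. ennreal (\<Sum>i\<in>I. (emp_proc P Y n (f i) \<omega>)^4) \<partial>M) \<le> ennreal (real N * K0 * \<sigma>\<^sup>2)"
proof -
  have "(\<integral>\<^sup>+\<omega>. ennreal (\<Sum>i\<in>I. (emp_proc P Y n (f i) \<omega>)^4) \<partial>M)
      = (\<integral>\<^sup>+\<omega>. (\<Sum>i\<in>I. ennreal ((emp_proc P Y n (f i) \<omega>)^4)) \<partial>M)"
    by (rule nn_integral_cong) (simp add: sum_ennreal)
  also have "\<dots> = (\<Sum>i\<in>I. \<integral>\<^sup>+\<omega>. ennreal ((emp_proc P Y n (f i) \<omega>)^4) \<partial>M)"
    by (rule nn_integral_sum) (use G_meas[OF fm] in auto)
  also have "\<dots> \<le> (\<Sum>i\<in>I. ennreal (K0 * \<sigma>\<^sup>2))"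
    by (rule sum_mono) (rule G4[OF fm fb sp fs], auto)
  also have "\<dots> = ennreal (real (card I) * (K0 * \<sigma>\<^sup>2))"
    using K0_nonneg by (simp add: ennreal_mult ennreal_of_nat_eq_real_of_nat)
  also have "\<dots> \<le> ennreal (real N * K0 * \<sigma>\<^sup>2)"
    by (rule ennreal_leI) (use cI K0_nonneg in \<open>simp add: mult_right_mono mult.assoc\<close>)
  finally show ?thesis .
qed

end

context chainset begin

definition mm :: "real \<Rightarrow> 'a \<Rightarrow> real" where "mm u z = min 1 (u * w z)"
definition FF :: "real \<Rightarrow> real" where "FF u = (\<integral>z. mm u z \<partial>P)"
definition pos :: "'a \<Rightarrow> real" where "pos z = (if 0 < w z then 1 else 0)"
definition QQ :: "real \<Rightarrow> real" where "QQ v = Inf {u. 0 \<le> u \<and> v \<le> FF u}"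
definition reach :: "real \<Rightarrow> bool" where "reach v = (\<exists>u\<ge>0. v \<le> FF u)"

lemma Bw_nonneg: "0 \<le> Bw" using w_nonneg w_le order_trans by blast

lemma mm_meas[measurable]: "mm u \<in> borel_measurable borel"
  unfolding mm_def using w_meas by measurable

lemma pos_meas[measurable]: "pos \<in> borel_measurable borel"
  unfolding pos_def using w_meas by measurable

lemma mm_nonneg: "0 \<le> u \<Longrightarrow> 0 \<le> mm u z" unfolding mm_def using w_nonneg by simp
lemma mm_le1: "mm u z \<le> 1" unfolding mm_def by simp
lemma mm_abs: "0 \<le> u \<Longrightarrow> \<bar>mm u z\<bar> \<le> 1" using mm_nonneg mm_le1 by (simp add: abs_le_iff)
lemma mm_mono: "0 \<le> u \<Longrightarrow> u \<le> u' \<Longrightarrow> mm u z \<le> mm u' z"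
  unfolding mm_def using w_nonneg[of z] by (simp add: min.coboundedI2 mult_right_mono)
lemma mm_le_pos: "0 \<le> u \<Longrightarrow> mm u z \<le> pos z"
  unfolding mm_def pos_def using w_nonneg[of z] by auto
lemma mm_0: "mm 0 z = 0" unfolding mm_def by simp
lemma pos_abs: "\<bar>pos z\<bar> \<le> 1" unfolding pos_def by simp

lemma mm_int: "integrable P (mm u)"
proof (rule intP[of _ "max 1 (\<bar>u\<bar>*Bw)"])
  fix z
  have a: "\<bar>u * w z\<bar> \<le> \<bar>u\<bar> * Bw" using w_nonneg[of z] w_le[of z] by (simp add: abs_mult mult_left_mono)
  show "\<bar>mm u z\<bar> \<le> max 1 (\<bar>u\<bar>*Bw)" unfolding mm_def using a by (auto simp: abs_le_iff min_def max_def)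
qed simp
lemma pos_int: "integrable P pos" by (rule intP[of _ 1]) (auto simp: pos_abs)

lemma FF_0: "FF 0 = 0"
proof -
  have "mm 0 = (\<lambda>_. 0)" by (rule ext) (simp add: mm_0)
  then show ?thesis unfolding FF_def by simp
qed

lemma FF_mono: "0 \<le> u \<Longrightarrow> u \<le> u' \<Longrightarrow> FF u \<le> FF u'"
  unfolding FF_def by (rule integral_mono[OF mm_int mm_int]) (rule mm_mono)

lemma FF_le1: "FF u \<le> 1"
proof -
  interpret prob_space P by (rule P_prob)
  have "FF u \<le> (\<integral>z. 1 \<partial>P)" unfolding FF_def
    by (rule integral_mono[OF mm_int]) (auto simp: mm_le1)
  then show ?thesis by (simp add: prob_space)
qed

lemma FF_nonneg: "0 \<le> u \<Longrightarrow> 0 \<le> FF u"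
  unfolding FF_def by (rule integral_nonneg_AE) (simp add: mm_nonneg)

lemma FF_le_pos: "0 \<le> u \<Longrightarrow> FF u \<le> integral\<^sup>L P pos"
  unfolding FF_def by (rule integral_mono[OF mm_int pos_int]) (rule mm_le_pos)

lemma FF_lip: "\<bar>FF u - FF u'\<bar> \<le> Bw * \<bar>u - u'\<bar>"
proof -
  interpret prob_space P by (rule P_prob)
  have pw: "\<bar>mm u z - mm u' z\<bar> \<le> Bw * \<bar>u - u'\<bar>" for z
  proof -
    have "\<bar>mm u z - mm u' z\<bar> \<le> \<bar>u * w z - u' * w z\<bar>" unfolding mm_def by linarith
    also have "\<dots> = \<bar>u - u'\<bar> * w z" using w_nonneg[of z] by (simp add: abs_mult left_diff_distrib[symmetric])
    also have "\<dots> \<le> \<bar>u - u'\<bar> * Bw" by (rule mult_left_mono[OF w_le]) simp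
    finally show ?thesis by (simp add: mult.commute)
  qed
  have "\<bar>FF u - FF u'\<bar> = \<bar>\<integral>z. mm u z - mm u' z \<partial>P\<bar>" unfolding FF_def
    using mm_int by simp
  also have "\<dots> \<le> (\<integral>z. \<bar>mm u z - mm u' z\<bar> \<partial>P)" by (rule integral_abs_bound)
  also have "\<dots> \<le> (\<integral>z. Bw * \<bar>u - u'\<bar> \<partial>P)"
    by (rule integral_mono) (use mm_int pw in auto)
  also have "\<dots> = Bw * \<bar>u - u'\<bar>" by (simp add: prob_space)
  finally show ?thesis .
qed

lemma QQ_props:
  assumes v0: "0 \<le> v" and r: "reach v"
  shows "0 \<le> QQ v" "FF (QQ v) = v" "\<And>u. 0 \<le> u \<Longrightarrow> v \<le> FF u \<Longrightarrow> QQ v \<le> u"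
proof -
  define S where "S = {u. 0 \<le> u \<and> v \<le> FF u}"
  have ne: "S \<noteq> {}" using r unfolding reach_def S_def by auto
  have bb: "bdd_below S" unfolding S_def by (rule bdd_belowI[of _ 0]) auto
  show low: "QQ v \<le> u" if "0 \<le> u" "v \<le> FF u" for u
    unfolding QQ_def S_def[symmetric] by (rule cInf_lower[OF _ bb]) (use that in \<open>simp add: S_def\<close>)
  show q0: "0 \<le> QQ v" unfolding QQ_def S_def[symmetric] by (rule cInf_greatest[OF ne]) (simp add: S_def)
  have ge: "v \<le> FF (QQ v)"
  proof (rule ccontr)
    assume "\<not> v \<le> FF (QQ v)"
    then have d: "FF (QQ v) < v" by simp
    define e where "e = (v - FF (QQ v)) / (Bw + 1)"
    have e0: "e > 0" using d Bw_nonneg by (simp add: e_def)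
    have "Inf S < QQ v + e" using e0 by (simp add: QQ_def S_def)
    then obtain u where uS: "u \<in> S" and ul: "u < QQ v + e" using cInf_lessD[OF ne] by blast
    have uq: "QQ v \<le> u" using uS low by (simp add: S_def)
    have "v \<le> FF u" using uS by (simp add: S_def)
    also have "FF u \<le> FF (QQ v) + Bw * \<bar>u - QQ v\<bar>" using FF_lip[of u "QQ v"] by linarith
    also have "\<dots> \<le> FF (QQ v) + Bw * e"
      using uq ul Bw_nonneg by (simp add: mult_left_mono)
    also have "\<dots> < FF (QQ v) + (Bw + 1) * e" using e0 by simp
    also have "\<dots> = v" using Bw_nonneg by (simp add: e_def)
    finally show False by simp
  qed
  have le: "FF (QQ v) \<le> v"
  proof (rule ccontr)
    assume "\<not> FF (QQ v) \<le> v"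
    then have d: "v < FF (QQ v)" by simp
    have qp: "0 < QQ v"
    proof (rule ccontr)
      assume "\<not> 0 < QQ v" then have "QQ v = 0" using q0 by simp
      then show False using d v0 FF_0 by simp
    qed
    define e where "e = min (QQ v) ((FF (QQ v) - v) / (Bw + 1))"
    have e0: "e > 0" using d Bw_nonneg qp by (simp add: e_def)
    have eq: "e \<le> QQ v" by (simp add: e_def)
    have "e \<le> (FF (QQ v) - v) / (Bw + 1)" by (simp add: e_def)
    then have "(Bw + 1) * e \<le> (Bw + 1) * ((FF (QQ v) - v) / (Bw + 1))"
      by (rule mult_left_mono) (use Bw_nonneg in simp)
    then have ee: "(Bw + 1) * e \<le> FF (QQ v) - v" using Bw_nonneg by simp
    have "FF (QQ v) - Bw * e \<le> FF (QQ v - e)" using FF_lip[of "QQ v" "QQ v - e"] e0 by simp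
    moreover have "v < FF (QQ v) - Bw * e" using ee e0 by (simp add: algebra_simps)
    ultimately have "v \<le> FF (QQ v - e)" by simp
    then have "QQ v \<le> QQ v - e" using low[of "QQ v - e"] eq by simp
    then show False using e0 by simp
  qed
  show "FF (QQ v) = v" using ge le by simp
qed

lemma QQ_mono:
  assumes "0 \<le> v1" "v1 \<le> v2" "reach v2"
  shows "QQ v1 \<le> QQ v2"
proof -
  have r1: "reach v1" using assms unfolding reach_def by (meson order_trans)
  show ?thesis using QQ_props(3)[OF assms(1) r1, of "QQ v2"] QQ_props(1,2)[OF _ assms(3)] assms by simp
qed

lemma reach_down: "reach v2 \<Longrightarrow> v1 \<le> v2 \<Longrightarrow> reach v1"
  unfolding reach_def by (meson order_trans)

lemma not_reach: assumes "\<not> reach v" shows "integral\<^sup>L P pos \<le> v"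
proof (rule ccontr)
  assume "\<not> integral\<^sup>L P pos \<le> v"
  then have lt: "v < integral\<^sup>L P pos" by simp
  have "(\<lambda>N. FF (real N)) \<longlonglongrightarrow> integral\<^sup>L P pos"
    unfolding FF_def
  proof (rule integral_dominated_convergence[where w="\<lambda>_. 1"])
    show "pos \<in> borel_measurable P" by (rule measP) simp
    show "mm (real i) \<in> borel_measurable P" for i by (rule measP) simp
    show "integrable P (\<lambda>_. 1::real)"
    proof - interpret prob_space P by (rule P_prob) show ?thesis by simp qed
    show "AE x in P. norm (mm (real i) x) \<le> 1" for i using mm_abs by simp
    show "AE x in P. (\<lambda>i. mm (real i) x) \<longlonglongrightarrow> pos x"
    proof (rule AE_I2)
      fix x
      show "(\<lambda>i. mm (real i) x) \<longlonglongrightarrow> pos x"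
      proof (cases "0 < w x")
        case False
        then have "w x = 0" using w_nonneg[of x] by simp
        then show ?thesis by (simp add: mm_def pos_def)
      next
        case True
        have ev: "eventually (\<lambda>i. mm (real i) x = 1) sequentially"
        proof -
          obtain N :: nat where N: "1 / w x < real N" using reals_Archimedean2 by blast
          show ?thesis
          proof (rule eventually_sequentiallyI[of N])
            fix i assume "N \<le> i"
            then have "1 / w x < real i" using N by (meson of_nat_le_iff order_less_le_trans)
            then have "1 < real i * w x" using True by (simp add: field_simps)
            then show "mm (real i) x = 1" by (simp add: mm_def)
          qed
        qed
        have "(\<lambda>i. mm (real i) x) \<longlonglongrightarrow> 1" by (rule tendsto_eventually[OF ev])
        then show ?thesis using True by (simp add: pos_def)
      qed
    qed
  qed
  then have "eventually (\<lambda>N. v < FF (real N)) sequentially" using lt by (rule order_tendstoD)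
  then obtain N where "v < FF (real N)" by (meson eventually_sequentially order_refl)
  then have "reach v" unfolding reach_def by (intro exI[of _ "real N"]) simp
  then show False using assms by simp
qed

end

context chainset begin

definition lev :: "nat \<Rightarrow> real \<Rightarrow> nat" where "lev k u = nat \<lfloor>FF u * 16^k\<rfloor>"
definition II :: "nat \<Rightarrow> nat set" where "II k = {i. i \<le> 16^k \<and> reach (real i / 16^k)}"
definition hh :: "('a \<Rightarrow> real) \<Rightarrow> real \<Rightarrow> 'a \<Rightarrow> real" where "hh \<psi> u z = \<psi> z * mm u z"
definition dd :: "('a \<Rightarrow> real) \<Rightarrow> nat \<Rightarrow> nat \<Rightarrow> 'a \<Rightarrow> real" where
  "dd \<psi> k i z = hh \<psi> (QQ (real i / 16^k)) z - (if k = 0 then 0 else hh \<psi> (QQ (real (i div 16) / 16^(k-1))) z)"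
definition up :: "nat \<Rightarrow> nat \<Rightarrow> 'a \<Rightarrow> real" where
  "up K j = (if reach ((real j + 1) / 16^K) then mm (QQ ((real j + 1) / 16^K)) else pos)"
definition br :: "nat \<Rightarrow> nat \<Rightarrow> 'a \<Rightarrow> real" where
  "br K j z = up K j z - mm (QQ (real j / 16^K)) z"

lemma finite_II: "finite (II k)" unfolding II_def by simp
lemma card_II: "card (II k) \<le> 16^k + 1"
proof -
  have "card (II k) \<le> card {..(16::nat)^k}" by (rule card_mono) (auto simp: II_def)
  then show ?thesis by simp
qed

lemma lev_facts:
  assumes u: "0 \<le> u"
  shows "real (lev k u) / 16^k \<le> FF u" "FF u < (real (lev k u) + 1) / 16^k" "lev k u \<in> II k"
proof -
  have F0: "0 \<le> FF u" by (rule FF_nonneg[OF u])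
  have p: "(0::real) < 16^k" by simp
  have rl: "real (lev k u) = of_int \<lfloor>FF u * 16^k\<rfloor>" unfolding lev_def using F0 by simp
  show a: "real (lev k u) / 16^k \<le> FF u" unfolding rl using p by (simp add: field_simps)
  show "FF u < (real (lev k u) + 1) / 16^k" unfolding rl using p by (simp add: field_simps) linarith
  have "real (lev k u) \<le> FF u * 16^k" using a p by (simp add: field_simps)
  also have "\<dots> \<le> 16^k" using FF_le1[of u] p by simp
  finally have "real (lev k u) \<le> real ((16::nat)^k)" by simp
  then have "lev k u \<le> 16^k" by (simp only: of_nat_le_iff)
  moreover have "reach (real (lev k u) / 16^k)" unfolding reach_def using a u by blast
  ultimately show "lev k u \<in> II k" by (simp add: II_def)
qed

lemma lev_Suc: assumes u: "0 \<le> u" shows "lev (Suc k) u div 16 = lev k u"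
proof -
  have F0: "0 \<le> FF u" by (rule FF_nonneg[OF u])
  have "\<lfloor>FF u * 16^(Suc k) / real_of_int 16\<rfloor> = \<lfloor>FF u * 16^(Suc k)\<rfloor> div 16"
    by (rule floor_divide_real_eq_div) simp
  then have e: "\<lfloor>FF u * 16^k\<rfloor> = \<lfloor>FF u * 16^(Suc k)\<rfloor> div 16" by simp
  show ?thesis unfolding lev_def e using F0 by (simp add: nat_div_distrib)
qed

lemma hh_meas[measurable]: "\<psi> \<in> borel_measurable borel \<Longrightarrow> hh \<psi> u \<in> borel_measurable borel"
  unfolding hh_def by (intro borel_measurable_times mm_meas)

lemma hh_abs: "(\<And>z. \<bar>\<psi> z\<bar> \<le> 1) \<Longrightarrow> 0 \<le> u \<Longrightarrow> \<bar>hh \<psi> u z\<bar> \<le> 1"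
  unfolding hh_def using mm_abs[of u z] by (simp add: abs_mult mult_le_one)

lemma hh_diff: "(\<And>z. \<bar>\<psi> z\<bar> \<le> 1) \<Longrightarrow> 0 \<le> a \<Longrightarrow> a \<le> b \<Longrightarrow> \<bar>hh \<psi> b z - hh \<psi> a z\<bar> \<le> mm b z - mm a z"
proof -
  assume p: "\<And>z. \<bar>\<psi> z\<bar> \<le> 1" and a: "0 \<le> a" "a \<le> b"
  have "\<bar>hh \<psi> b z - hh \<psi> a z\<bar> = \<bar>\<psi> z\<bar> * \<bar>mm b z - mm a z\<bar>"
    unfolding hh_def by (simp add: abs_mult[symmetric] right_diff_distrib)
  also have "\<dots> \<le> 1 * \<bar>mm b z - mm a z\<bar>" by (rule mult_right_mono[OF p]) simp
  also have "\<dots> = mm b z - mm a z" using mm_mono[OF a] by simp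
  finally show ?thesis .
qed

lemma dd_meas[measurable]: "\<psi> \<in> borel_measurable borel \<Longrightarrow> dd \<psi> k i \<in> borel_measurable borel"
  unfolding dd_def by (cases "k = 0") (auto intro!: borel_measurable_diff hh_meas)

lemma br_meas[measurable]: "br K j \<in> borel_measurable borel"
  unfolding br_def up_def by (intro borel_measurable_diff) (auto simp: mm_meas pos_meas)

lemma dd_bounds:
  assumes p: "\<And>z. \<bar>\<psi> z\<bar> \<le> 1" and i: "i \<in> II k"
  shows "\<bar>dd \<psi> k i z\<bar> \<le> 1" "\<bar>dd \<psi> k i z\<bar> \<le> (if k = 0 then 1 else mm (QQ (real i / 16^k)) z - mm (QQ (real (i div 16) / 16^(k-1))) z)"
proof -
  have r: "reach (real i / 16^k)" using i by (simp add: II_def)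
  have q0: "0 \<le> QQ (real i / 16^k)" by (rule QQ_props(1)[OF _ r]) simp
  have "\<bar>dd \<psi> k i z\<bar> \<le> 1 \<and> \<bar>dd \<psi> k i z\<bar> \<le> (if k = 0 then 1 else mm (QQ (real i / 16^k)) z - mm (QQ (real (i div 16) / 16^(k-1))) z)"
  proof (cases "k = 0")
    case True then show ?thesis using hh_abs[OF p q0] by (simp add: dd_def)
  next
    case False
    then obtain k' where k: "k = Suc k'" by (cases k) auto
    have le: "real (i div 16) / 16^k' \<le> real i / 16^k"
    proof -
      have "real (i div 16) * 16 \<le> real i" by (metis div_times_less_eq_dividend of_nat_le_iff of_nat_mult of_nat_numeral)
      then show ?thesis unfolding k by (simp add: field_simps)
    qed
    have mono: "QQ (real (i div 16) / 16^k') \<le> QQ (real i / 16^k)"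
      by (rule QQ_mono[OF _ le r]) simp
    have q1: "0 \<le> QQ (real (i div 16) / 16^k')" by (rule QQ_props(1)) (use reach_down[OF r le] in simp_all)
    have d: "\<bar>dd \<psi> k i z\<bar> \<le> mm (QQ (real i / 16^k)) z - mm (QQ (real (i div 16) / 16^k')) z"
      unfolding dd_def using hh_diff[OF p q1 mono] k by simp
    moreover have "mm (QQ (real i / 16^k)) z - mm (QQ (real (i div 16) / 16^k')) z \<le> 1"
      using mm_le1[of "QQ (real i / 16^k)" z] mm_nonneg[OF q1, of z] by linarith
    ultimately show ?thesis using k by simp
  qed
  then show "\<bar>dd \<psi> k i z\<bar> \<le> 1" "\<bar>dd \<psi> k i z\<bar> \<le> (if k = 0 then 1 else mm (QQ (real i / 16^k)) z - mm (QQ (real (i div 16) / 16^(k-1))) z)"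
    by auto
qed


lemma int_diff_mm: "(\<integral>z. mm a z - mm b z \<partial>P) = FF a - FF b"
  unfolding FF_def using mm_int by simp

lemma sq_le_abs: "\<bar>x::real\<bar> \<le> 1 \<Longrightarrow> x\<^sup>2 \<le> \<bar>x\<bar>"
  by (simp add: power2_eq_square abs_le_iff) (smt (verit, best) abs_mult_self_eq abs_le_iff mult_left_le_one_le abs_ge_zero)

lemma dd_L2:
  assumes pm: "\<psi> \<in> borel_measurable borel" and p: "\<And>z. \<bar>\<psi> z\<bar> \<le> 1" and i: "i \<in> II k"
  shows "(\<integral>z. (dd \<psi> k i z)\<^sup>2 \<partial>P) \<le> 16 / 16^k"
proof -
  interpret prob_space P by (rule P_prob)
  have r: "reach (real i / 16^k)" using i by (simp add: II_def)
  have db: "\<bar>dd \<psi> k i z\<bar> \<le> 1" for z using dd_bounds(1)[OF p i] .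
  have isq: "integrable P (\<lambda>z. (dd \<psi> k i z)\<^sup>2)"
  proof (rule intP[of _ 1])
    show "(\<lambda>z. (dd \<psi> k i z)\<^sup>2) \<in> borel_measurable borel" by (intro borel_measurable_power dd_meas pm)
    fix z have "(dd \<psi> k i z)\<^sup>2 \<le> 1" using sq_le_abs[OF db[of z]] db[of z] by linarith
    then show "\<bar>(dd \<psi> k i z)\<^sup>2\<bar> \<le> 1" by simp
  qed
  show ?thesis
  proof (cases "k = 0")
    case True
    have "(\<integral>z. (dd \<psi> k i z)\<^sup>2 \<partial>P) \<le> (\<integral>z. 1 \<partial>P)"
      by (rule integral_mono[OF isq]) (use db sq_le_abs in \<open>auto intro: order_trans\<close>)
    then show ?thesis using True by (simp add: prob_space)
  next
    case False
    then obtain k' where k: "k = Suc k'" by (cases k) auto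
    have le: "real (i div 16) / 16^k' \<le> real i / 16^k"
    proof -
      have "real (i div 16) * 16 \<le> real i" by (metis div_times_less_eq_dividend of_nat_le_iff of_nat_mult of_nat_numeral)
      then show ?thesis unfolding k by (simp add: field_simps)
    qed
    have r2: "reach (real (i div 16) / 16^k')" by (rule reach_down[OF r le])
    have "(\<integral>z. (dd \<psi> k i z)\<^sup>2 \<partial>P) \<le> (\<integral>z. mm (QQ (real i / 16^k)) z - mm (QQ (real (i div 16) / 16^k')) z \<partial>P)"
    proof (rule integral_mono[OF isq])
      show "integrable P (\<lambda>z. mm (QQ (real i / 16^k)) z - mm (QQ (real (i div 16) / 16^k')) z)"
        using mm_int by simp
      fix z
      have "(dd \<psi> k i z)\<^sup>2 \<le> \<bar>dd \<psi> k i z\<bar>" by (rule sq_le_abs[OF db])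
      also have "\<dots> \<le> mm (QQ (real i / 16^k)) z - mm (QQ (real (i div 16) / 16^k')) z"
        using dd_bounds(2)[OF p i, where z=z] k by simp
      finally show "(dd \<psi> k i z)\<^sup>2 \<le> mm (QQ (real i / 16^k)) z - mm (QQ (real (i div 16) / 16^k')) z" .
    qed
    also have "\<dots> = real i / 16^k - real (i div 16) / 16^k'"
      unfolding int_diff_mm using QQ_props(2)[OF _ r] QQ_props(2)[OF _ r2] by simp
    also have "\<dots> \<le> 16 / 16^k"
    proof -
      have "i < 16 * (i div 16) + 16" by simp
      then have h: "real i \<le> 16 * real (i div 16) + 16" by linarith
      have "real i * 16^k' \<le> (16 * real (i div 16) + 16) * 16^k'" by (rule mult_right_mono[OF h]) simp
      then show ?thesis unfolding k by (simp add: field_simps)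
    qed
    finally show ?thesis .
  qed
qed

lemma br_bounds:
  assumes j: "j \<in> II K"
  shows "0 \<le> br K j z" "br K j z \<le> 1" "(\<integral>z. br K j z \<partial>P) \<le> 1 / 16^K"
proof -
  define v where "v = real j / 16^K"
  define v' where "v' = (real j + 1) / 16^K"
  have r: "reach v" using j by (simp add: II_def v_def)
  have v0: "0 \<le> v" by (simp add: v_def)
  have q0: "0 \<le> QQ v" by (rule QQ_props(1)[OF v0 r])
  have vv: "v \<le> v'" by (simp add: v_def v'_def divide_right_mono)
  have FQ: "FF (QQ v) = v" by (rule QQ_props(2)[OF v0 r])
  have "0 \<le> br K j z \<and> br K j z \<le> 1 \<and> (\<integral>z. br K j z \<partial>P) \<le> 1 / 16^K"
  proof (cases "reach v'")
    case True
    have mono: "QQ v \<le> QQ v'" by (rule QQ_mono[OF v0 vv True])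
    note rr = True
    have bre: "br K j = (\<lambda>z. mm (QQ v') z - mm (QQ v) z)"
    proof (rule ext)
      fix z
      have "reach ((real j + 1) / 16^K)" using rr by (simp add: v'_def)
      then show "br K j z = mm (QQ v') z - mm (QQ v) z" by (simp add: br_def up_def v_def v'_def)
    qed
    have "FF (QQ v') = v'" by (rule QQ_props(2)[OF _ True]) (use v0 vv in simp)
    then have "(\<integral>z. br K j z \<partial>P) = v' - v" unfolding bre int_diff_mm FQ by simp
    also have "\<dots> = 1 / 16^K" by (simp add: v_def v'_def field_simps)
    finally show ?thesis unfolding bre using mm_mono[OF q0 mono, of z] mm_le1[of "QQ v'" z] mm_nonneg[OF q0, of z] by simp
  next
    case False
    note nr = False
    have bre: "br K j = (\<lambda>z. pos z - mm (QQ v) z)"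
    proof (rule ext)
      fix z
      have "\<not> reach ((real j + 1) / 16^K)" using nr by (simp add: v'_def)
      then show "br K j z = pos z - mm (QQ v) z" by (simp add: br_def up_def v_def)
    qed
    have "(\<integral>z. br K j z \<partial>P) = integral\<^sup>L P pos - v" unfolding bre using pos_int mm_int FQ
      by (simp add: FF_def)
    also have "\<dots> \<le> v' - v" using not_reach[OF nr] by simp
    also have "\<dots> = 1 / 16^K" by (simp add: v_def v'_def field_simps)
    finally show ?thesis unfolding bre using mm_le_pos[OF q0, of z] mm_nonneg[OF q0, of z] pos_abs[of z]
      by (simp add: abs_le_iff)
  qed
  then show "0 \<le> br K j z" "br K j z \<le> 1" "(\<integral>z. br K j z \<partial>P) \<le> 1 / 16^K" by auto
qed

lemma br_L2:
  assumes j: "j \<in> II K"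
  shows "(\<integral>z. (br K j z)\<^sup>2 \<partial>P) \<le> 1 / 16^K"
proof -
  have "(\<integral>z. (br K j z)\<^sup>2 \<partial>P) \<le> (\<integral>z. br K j z \<partial>P)"
  proof (rule integral_mono)
    show "integrable P (\<lambda>z. (br K j z)\<^sup>2)"
      by (rule intP[of _ 1]) (use br_bounds[OF j] in \<open>auto simp: power2_eq_square abs_le_iff intro: mult_le_one\<close>)
    show "integrable P (br K j)" by (rule intP[of _ 1]) (use br_bounds[OF j] in \<open>auto simp: abs_le_iff\<close>)
    fix z show "(br K j z)\<^sup>2 \<le> br K j z" using sq_le_abs[of "br K j z"] br_bounds(1,2)[OF j, of z] by simp
  qed
  also have "\<dots> \<le> 1 / 16^K" by (rule br_bounds(3)[OF j])
  finally show ?thesis .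
qed

end

lemma inv8: "1/((1/2::real)^k)^3 = 8^k"
proof -
  have "((1/2::real)^k)^3 = (1/8)^k" by (simp add: power_mult[symmetric] mult.commute[of k] power_mult power_divide)
  then show ?thesis by (simp add: power_one_over)
qed

lemma max_trick:
  fixes X :: "'i \<Rightarrow> real"
  assumes "finite I" "i \<in> I" "a > 0"
  shows "\<bar>X i\<bar> \<le> a + 8 * 0 + (1/a^3) * (\<Sum>j\<in>I. (X j)^4)"
proof (cases "\<bar>X i\<bar> \<le> a")
  case True
  have "0 \<le> (\<Sum>j\<in>I. (X j)^4)" by (rule sum_nonneg) (simp add: zero_le_even_power)
  then have "0 \<le> (1/a^3) * (\<Sum>j\<in>I. (X j)^4)" using assms by simp
  then show ?thesis using True by simp
next
  case False
  then have ai: "a < \<bar>X i\<bar>" by simp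
  have "\<bar>X i\<bar> * a^3 \<le> \<bar>X i\<bar> * \<bar>X i\<bar>^3"
    by (rule mult_left_mono[OF power_mono]) (use ai assms in auto)
  also have "\<dots> = \<bar>X i\<bar>^4" by (simp add: eval_nat_numeral)
  also have "\<dots> = (X i)^4" by (simp add: power_even_abs)
  also have "\<dots> \<le> (\<Sum>j\<in>I. (X j)^4)" by (rule member_le_sum) (use assms in \<open>auto simp: zero_le_even_power\<close>)
  finally have "\<bar>X i\<bar> * a^3 \<le> (\<Sum>j\<in>I. (X j)^4)" .
  then have "\<bar>X i\<bar> \<le> (1/a^3) * (\<Sum>j\<in>I. (X j)^4)" using assms by (simp add: field_simps)
  then show ?thesis using assms by simp
qed

context chainset begin

lemma hhQ_abs:
  assumes p: "\<And>z. \<bar>\<psi> z\<bar> \<le> 1" and u: "0 \<le> u"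
  shows "\<bar>hh \<psi> (QQ (real (lev K u) / 16^K)) z\<bar> \<le> 1" "0 \<le> QQ (real (lev K u) / 16^K)"
proof -
  have r: "reach (real (lev K u) / 16^K)" using lev_facts(3)[OF u, of K] by (simp add: II_def)
  show q: "0 \<le> QQ (real (lev K u) / 16^K)" by (rule QQ_props(1)[OF _ r]) simp
  show "\<bar>hh \<psi> (QQ (real (lev K u) / 16^K)) z\<bar> \<le> 1" by (rule hh_abs[OF p q])
qed

lemma telescope:
  assumes pm: "\<psi> \<in> borel_measurable borel" and p: "\<And>z. \<bar>\<psi> z\<bar> \<le> 1" and u: "0 \<le> u"
  shows "emp_proc P Y n (hh \<psi> (QQ (real (lev K u) / 16^K))) \<omega> = (\<Sum>k\<le>K. emp_proc P Y n (dd \<psi> k (lev k u)) \<omega>)"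
proof (induction K)
  case 0
  have "dd \<psi> 0 (lev 0 u) = hh \<psi> (QQ (real (lev 0 u) / 16^0))" by (rule ext) (simp add: dd_def)
  then show ?case by simp
next
  case (Suc K)
  have e: "dd \<psi> (Suc K) (lev (Suc K) u) = (\<lambda>z. hh \<psi> (QQ (real (lev (Suc K) u) / 16^Suc K)) z - hh \<psi> (QQ (real (lev K u) / 16^K)) z)"
    by (rule ext) (simp add: dd_def lev_Suc[OF u])
  have "emp_proc P Y n (dd \<psi> (Suc K) (lev (Suc K) u)) \<omega> =
      emp_proc P Y n (hh \<psi> (QQ (real (lev (Suc K) u) / 16^Suc K))) \<omega> - emp_proc P Y n (hh \<psi> (QQ (real (lev K u) / 16^K))) \<omega>"
    unfolding e
  proof (rule G_diff[of "hh \<psi> (QQ (real (lev (Suc K) u) / 16^Suc K))" 1 "hh \<psi> (QQ (real (lev K u) / 16^K))" 1])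
    show "\<bar>hh \<psi> (QQ (real (lev (Suc K) u) / 16^Suc K)) z\<bar> \<le> 1" for z by (rule hhQ_abs(1)[OF p u])
    show "\<bar>hh \<psi> (QQ (real (lev K u) / 16^K)) z\<bar> \<le> 1" for z by (rule hhQ_abs(1)[OF p u])
  qed (use pm in auto)
  then show ?case using Suc by simp
qed

lemma remainder:
  assumes p: "\<And>z. \<bar>\<psi> z\<bar> \<le> 1" and u: "0 \<le> u"
  shows "\<bar>hh \<psi> u z - hh \<psi> (QQ (real (lev K u) / 16^K)) z\<bar> \<le> br K (lev K u) z"
proof -
  define j where "j = lev K u"
  define v where "v = real j / 16^K"
  define v' where "v' = (real j + 1) / 16^K"
  have r: "reach v" using lev_facts(3)[OF u, of K] by (simp add: II_def v_def j_def)
  have v0: "0 \<le> v" by (simp add: v_def)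
  have q0: "0 \<le> QQ v" by (rule QQ_props(1)[OF v0 r])
  have vF: "v \<le> FF u" using lev_facts(1)[OF u, of K] by (simp add: v_def j_def)
  have Fv': "FF u < v'" using lev_facts(2)[OF u, of K] by (simp add: v'_def j_def)
  have qu: "QQ v \<le> u" by (rule QQ_props(3)[OF v0 r u vF])
  have "\<bar>hh \<psi> u z - hh \<psi> (QQ v) z\<bar> \<le> mm u z - mm (QQ v) z" by (rule hh_diff[OF p q0 qu])
  also have "\<dots> \<le> br K j z"
  proof (cases "reach v'")
    case True
    note rr = True
    have v'0: "0 \<le> v'" by (simp add: v'_def)
    have "u \<le> QQ v'"
    proof (rule ccontr)
      assume "\<not> u \<le> QQ v'"
      then have "QQ v' \<le> u" by simp
      then have "FF (QQ v') \<le> FF u" by (rule FF_mono[OF QQ_props(1)[OF v'0 rr]])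
      then show False using QQ_props(2)[OF v'0 rr] Fv' by simp
    qed
    then have "mm u z \<le> mm (QQ v') z" by (rule mm_mono[OF u])
    moreover have "reach ((real j + 1) / 16^K)" using rr by (simp add: v'_def)
    ultimately show ?thesis by (simp add: br_def up_def v_def v'_def)
  next
    case False
    note nr = False
    have "\<not> reach ((real j + 1) / 16^K)" using nr by (simp add: v'_def)
    then show ?thesis using mm_le_pos[OF u, of z] by (simp add: br_def up_def v_def)
  qed
  finally show ?thesis by (simp add: j_def v_def)
qed

definition Phi :: "nat \<Rightarrow> ('a \<Rightarrow> real) \<Rightarrow> nat \<Rightarrow> 'o \<Rightarrow> real" where
  "Phi n \<psi> K \<omega> = (\<Sum>k\<le>K. (1/2)^k + 8^k * (\<Sum>i\<in>II k. (emp_proc P Y n (dd \<psi> k i) \<omega>)^4))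
     + ((1/2)^K + 8^K * (\<Sum>j\<in>II K. (emp_proc P Y n (br K j) \<omega>)^4)) + 2 * sqrt n / 16^K"

lemma pointwise:
  assumes n: "n > 0" and pm: "\<psi> \<in> borel_measurable borel" and p: "\<And>z. \<bar>\<psi> z\<bar> \<le> 1" and u: "0 \<le> u"
  shows "\<bar>emp_proc P Y n (hh \<psi> u) \<omega>\<bar> \<le> Phi n \<psi> K \<omega>"
proof -
  define pK where "pK = QQ (real (lev K u) / 16^K)"
  have pK0: "0 \<le> pK" using hhQ_abs(2)[OF p u] by (simp add: pK_def)
  have hb: "\<bar>hh \<psi> u z\<bar> \<le> 1" for z by (rule hh_abs[OF p u])
  have hbK: "\<bar>hh \<psi> pK z\<bar> \<le> 1" for z by (rule hh_abs[OF p pK0])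
  have jI: "lev K u \<in> II K" by (rule lev_facts(3)[OF u])
  have split: "emp_proc P Y n (hh \<psi> u) \<omega> = emp_proc P Y n (\<lambda>z. hh \<psi> u z - hh \<psi> pK z) \<omega> + emp_proc P Y n (hh \<psi> pK) \<omega>"
    using G_diff[of "hh \<psi> u" 1 "hh \<psi> pK" 1 n \<omega>] pm hb hbK by simp
  have A: "\<bar>emp_proc P Y n (hh \<psi> pK) \<omega>\<bar> \<le> (\<Sum>k\<le>K. (1/2)^k + 8^k * (\<Sum>i\<in>II k. (emp_proc P Y n (dd \<psi> k i) \<omega>)^4))"
  proof -
    have "\<bar>emp_proc P Y n (hh \<psi> pK) \<omega>\<bar> = \<bar>\<Sum>k\<le>K. emp_proc P Y n (dd \<psi> k (lev k u)) \<omega>\<bar>"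
      unfolding pK_def telescope[OF pm p u] ..
    also have "\<dots> \<le> (\<Sum>k\<le>K. \<bar>emp_proc P Y n (dd \<psi> k (lev k u)) \<omega>\<bar>)" by (rule sum_abs)
    also have "\<dots> \<le> (\<Sum>k\<le>K. (1/2)^k + 8^k * (\<Sum>i\<in>II k. (emp_proc P Y n (dd \<psi> k i) \<omega>)^4))"
    proof (rule sum_mono)
      fix k
      have "\<bar>emp_proc P Y n (dd \<psi> k (lev k u)) \<omega>\<bar> \<le> (1/2)^k + 8 * 0 + (1/((1/2)^k)^3) * (\<Sum>i\<in>II k. (emp_proc P Y n (dd \<psi> k i) \<omega>)^4)"
        by (rule max_trick[OF finite_II lev_facts(3)[OF u]]) simp
      also have "(1/((1/2::real)^k)^3) = 8^k" by (rule inv8)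
      finally show "\<bar>emp_proc P Y n (dd \<psi> k (lev k u)) \<omega>\<bar> \<le> (1/2)^k + 8^k * (\<Sum>i\<in>II k. (emp_proc P Y n (dd \<psi> k i) \<omega>)^4)" by simp
    qed
    finally show ?thesis .
  qed
  have B: "\<bar>emp_proc P Y n (\<lambda>z. hh \<psi> u z - hh \<psi> pK z) \<omega>\<bar> \<le> ((1/2)^K + 8^K * (\<Sum>j\<in>II K. (emp_proc P Y n (br K j) \<omega>)^4)) + 2 * sqrt n / 16^K"
  proof -
    have "\<bar>emp_proc P Y n (\<lambda>z. hh \<psi> u z - hh \<psi> pK z) \<omega>\<bar> \<le> emp_proc P Y n (br K (lev K u)) \<omega> + 2 * sqrt n * integral\<^sup>L P (br K (lev K u))"
    proof (rule G_brack[OF n])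
      show "(\<lambda>z. hh \<psi> u z - hh \<psi> pK z) \<in> borel_measurable borel" using pm by (intro borel_measurable_diff hh_meas)
      show "\<bar>hh \<psi> u z - hh \<psi> pK z\<bar> \<le> 2" for z using hb[of z] hbK[of z] by linarith
      show "br K (lev K u) \<in> borel_measurable borel" by (rule br_meas)
      show "\<bar>br K (lev K u) z\<bar> \<le> 1" for z using br_bounds(1,2)[OF jI, of z] by simp
      show "\<bar>hh \<psi> u z - hh \<psi> pK z\<bar> \<le> br K (lev K u) z" for z unfolding pK_def by (rule remainder[OF p u])
    qed
    also have "\<dots> \<le> \<bar>emp_proc P Y n (br K (lev K u)) \<omega>\<bar> + 2 * sqrt n / 16^K"
    proof -
      have "2 * sqrt n * integral\<^sup>L P (br K (lev K u)) \<le> 2 * sqrt n * (1 / 16^K)"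
        by (rule mult_left_mono[OF br_bounds(3)[OF jI]]) simp
      then show ?thesis by simp
    qed
    also have "\<bar>emp_proc P Y n (br K (lev K u)) \<omega>\<bar> \<le> (1/2)^K + 8 * 0 + (1/((1/2)^K)^3) * (\<Sum>j\<in>II K. (emp_proc P Y n (br K j) \<omega>)^4)"
      by (rule max_trick[OF finite_II jI]) simp
    also have "(1/((1/2::real)^K)^3) = 8^K" by (rule inv8)
    finally show ?thesis by simp
  qed
  have "\<bar>emp_proc P Y n (hh \<psi> u) \<omega>\<bar> \<le> \<bar>emp_proc P Y n (\<lambda>z. hh \<psi> u z - hh \<psi> pK z) \<omega>\<bar> + \<bar>emp_proc P Y n (hh \<psi> pK) \<omega>\<bar>"
    unfolding split by (rule abs_triangle_ineq)
  also have "\<dots> \<le> Phi n \<psi> K \<omega>" using A B unfolding Phi_def by linarith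
  finally show ?thesis .
qed

end

lemma geo_half: "(\<Sum>k\<le>K. (1/2::real)^k) = 2 - (1/2)^K"
  by (induction K) (auto simp: field_simps)

lemma arith1:
  assumes K0: "0 \<le> (K0::real)" and s: "s \<le> ennreal ((16^k+1) * K0 * (c/16^k)\<^sup>2)" and c: "0 \<le> c" "c \<le> 16"
  shows "ennreal (8^k) * s \<le> ennreal (512 * K0 * (1/2)^k)"
proof -
  define x :: real where "x = 16^k"
  have x1: "1 \<le> x" by (simp add: x_def)
  have "ennreal (8^k) * s \<le> ennreal (8^k) * ennreal ((16^k+1) * K0 * (c/16^k)\<^sup>2)"
    by (rule mult_left_mono[OF s]) simp
  also have "\<dots> = ennreal (8^k * ((x+1) * K0 * (c/x)\<^sup>2))"
    by (subst ennreal_mult[symmetric]) (use K0 in \<open>simp_all add: x_def\<close>)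
  also have "\<dots> \<le> ennreal (512 * K0 * (1/2)^k)"
  proof (rule ennreal_leI)
    have cc: "c\<^sup>2 \<le> 256" using c power_mono[OF c(2) c(1), of 2] by simp
    have "8^k * ((x+1) * K0 * (c/x)\<^sup>2) = (8^k / x) * ((x+1)/x) * K0 * c\<^sup>2"
      using x1 by (simp add: power2_eq_square field_simps)
    also have "\<dots> \<le> (8^k / x) * 2 * K0 * 256"
    proof -
      have a: "(x+1)/x \<le> 2" using x1 by (simp add: field_simps)
      have b: "0 \<le> 8^k / x" using x1 by simp
      have "(8^k / x) * ((x+1)/x) \<le> (8^k / x) * 2" by (rule mult_left_mono[OF a b])
      then have "(8^k / x) * ((x+1)/x) * (K0 * c\<^sup>2) \<le> (8^k / x) * 2 * (K0 * 256)"
        by (rule mult_mono) (use K0 cc b x1 in \<open>auto intro: mult_left_mono\<close>)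
      then show ?thesis by (simp add: mult.assoc)
    qed
    also have "8^k / x = (1/2::real)^k" by (simp add: x_def power_divide[symmetric])
    finally show "8^k * ((x+1) * K0 * (c/x)\<^sup>2) \<le> 512 * K0 * (1/2)^k" by (simp add: mult_ac)
  qed
  finally show ?thesis .
qed

context chainset begin

lemma aff:
  assumes Sm: "S \<in> borel_measurable M" and S0: "\<And>\<omega>. 0 \<le> S \<omega>" and a: "0 \<le> a" and b: "0 \<le> b"
    and s: "(\<integral>\<^sup>+\<omega>. ennreal (S \<omega>) \<partial>M) \<le> t"
  shows "(\<integral>\<^sup>+\<omega>. ennreal (a + b * S \<omega>) \<partial>M) \<le> ennreal a + ennreal b * t"
proof -
  interpret prob_space M by (rule M_prob)
  have "(\<integral>\<^sup>+\<omega>. ennreal (a + b * S \<omega>) \<partial>M) = (\<integral>\<^sup>+\<omega>. ennreal a + ennreal b * ennreal (S \<omega>) \<partial>M)"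
    using a b S0 by (simp add: ennreal_plus ennreal_mult)
  also have "\<dots> = (\<integral>\<^sup>+\<omega>. ennreal a \<partial>M) + (\<integral>\<^sup>+\<omega>. ennreal b * ennreal (S \<omega>) \<partial>M)"
    by (rule nn_integral_add) (use Sm in auto)
  also have "(\<integral>\<^sup>+\<omega>. ennreal b * ennreal (S \<omega>) \<partial>M) = ennreal b * (\<integral>\<^sup>+\<omega>. ennreal (S \<omega>) \<partial>M)"
    by (rule nn_integral_cmult) (use Sm in auto)
  also have "(\<integral>\<^sup>+\<omega>. ennreal a \<partial>M) = ennreal a" by (simp add: emeasure_space_1)
  finally show ?thesis using s by (metis add_left_mono mult_left_mono zero_le)
qed

lemma S_meas:
  assumes "\<And>i. i \<in> I \<Longrightarrow> f i \<in> borel_measurable borel"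
  shows "(\<lambda>\<omega>. \<Sum>i\<in>I. (emp_proc P Y n (f i) \<omega>)^4) \<in> borel_measurable M"
  by (intro borel_measurable_sum borel_measurable_power G_meas assms)

lemma E_Phi:
  assumes pm: "\<psi> \<in> borel_measurable borel" and p: "\<And>z. \<bar>\<psi> z\<bar> \<le> 1"
  shows "(\<integral>\<^sup>+\<omega>. ennreal (Phi n \<psi> K \<omega>) \<partial>M) \<le> ennreal (2*(1+512*K0) + (1 + 512*K0) + 2 * sqrt n / 16^K)"
proof -
  interpret prob_space M by (rule M_prob)
  define S where "S k \<omega> = (\<Sum>i\<in>II k. (emp_proc P Y n (dd \<psi> k i) \<omega>)^4)" for k \<omega>
  define R where "R \<omega> = (\<Sum>j\<in>II K. (emp_proc P Y n (br K j) \<omega>)^4)" for \<omega>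
  define c where "c = 2 * sqrt n / 16^K"
  have S0: "0 \<le> S k \<omega>" for k \<omega> unfolding S_def by (rule sum_nonneg) (simp add: zero_le_even_power)
  have R0: "0 \<le> R \<omega>" for \<omega> unfolding R_def by (rule sum_nonneg) (simp add: zero_le_even_power)
  have c0: "0 \<le> c" by (simp add: c_def)
  have Sm: "S k \<in> borel_measurable M" for k unfolding S_def[abs_def] by (rule S_meas) (rule dd_meas[OF pm])
  have Rm: "R \<in> borel_measurable M" unfolding R_def[abs_def] by (rule S_meas) (rule br_meas)
  have T: "(\<integral>\<^sup>+\<omega>. ennreal ((1/2)^k + 8^k * S k \<omega>) \<partial>M) \<le> ennreal ((1/2)^k * (1 + 512*K0))" for k
  proof -
    have "(\<integral>\<^sup>+\<omega>. ennreal (S k \<omega>) \<partial>M) \<le> ennreal (real (16^k+1) * K0 * (16/16^k)\<^sup>2)"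
      unfolding S_def
    proof (rule G4_sum[OF finite_II card_II])
      show "dd \<psi> k i \<in> borel_measurable borel" for i by (rule dd_meas[OF pm])
      show "\<bar>dd \<psi> k i z\<bar> \<le> 1" if "i \<in> II k" for i z by (rule dd_bounds(1)[OF p that])
      show "(\<integral>z. (dd \<psi> k i z)\<^sup>2 \<partial>P) \<le> 16/16^k" if "i \<in> II k" for i by (rule dd_L2[OF pm p that])
    qed simp
    then have s: "(\<integral>\<^sup>+\<omega>. ennreal (S k \<omega>) \<partial>M) \<le> ennreal ((16^k+1) * K0 * (16/16^k)\<^sup>2)" by (simp add: add.commute)
    have "(\<integral>\<^sup>+\<omega>. ennreal ((1/2)^k + 8^k * S k \<omega>) \<partial>M) \<le> ennreal ((1/2)^k) + ennreal (8^k) * (\<integral>\<^sup>+\<omega>. ennreal (S k \<omega>) \<partial>M)"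
      by (rule aff[OF Sm S0]) simp_all
    also have "\<dots> \<le> ennreal ((1/2)^k) + ennreal (512 * K0 * (1/2)^k)"
      by (rule add_left_mono[OF arith1[OF K0_nonneg s]]) simp_all
    also have "\<dots> = ennreal ((1/2)^k * (1 + 512*K0))" using K0_nonneg
      by (simp add: ennreal_plus[symmetric] algebra_simps del: ennreal_plus)
    finally show ?thesis .
  qed
  have Rb: "(\<integral>\<^sup>+\<omega>. ennreal ((1/2)^K + 8^K * R \<omega>) \<partial>M) \<le> ennreal (1 + 512*K0)"
  proof -
    have "(\<integral>\<^sup>+\<omega>. ennreal (R \<omega>) \<partial>M) \<le> ennreal (real (16^K+1) * K0 * (1/16^K)\<^sup>2)"
      unfolding R_def
    proof (rule G4_sum[OF finite_II card_II])
      show "br K j \<in> borel_measurable borel" for j by (rule br_meas)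
      show "\<bar>br K j z\<bar> \<le> 1" if "j \<in> II K" for j z using br_bounds(1,2)[OF that, of z] by simp
      show "(\<integral>z. (br K j z)\<^sup>2 \<partial>P) \<le> 1/16^K" if "j \<in> II K" for j by (rule br_L2[OF that])
    qed simp
    then have s: "(\<integral>\<^sup>+\<omega>. ennreal (R \<omega>) \<partial>M) \<le> ennreal ((16^K+1) * K0 * (1/16^K)\<^sup>2)" by (simp add: add.commute)
    have "(\<integral>\<^sup>+\<omega>. ennreal ((1/2)^K + 8^K * R \<omega>) \<partial>M) \<le> ennreal ((1/2)^K) + ennreal (8^K) * (\<integral>\<^sup>+\<omega>. ennreal (R \<omega>) \<partial>M)"
      by (rule aff[OF Rm R0]) simp_all
    also have "\<dots> \<le> ennreal ((1/2)^K) + ennreal (512 * K0 * (1/2)^K)"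
      by (rule add_left_mono[OF arith1[OF K0_nonneg s]]) simp_all
    also have "\<dots> = ennreal ((1/2)^K * (1 + 512*K0))"
      using K0_nonneg by (simp add: ennreal_plus[symmetric] algebra_simps del: ennreal_plus)
    also have "\<dots> \<le> ennreal (1 + 512*K0)"
    proof (rule ennreal_leI)
      have "(1/2::real)^K \<le> 1" by (simp add: power_le_one)
      then show "(1/2)^K * (1 + 512*K0) \<le> 1 + 512*K0"
        using K0_nonneg by (simp add: mult_left_le_one_le)
    qed
    finally show ?thesis .
  qed
  have pw: "ennreal (Phi n \<psi> K \<omega>) = (\<Sum>k\<le>K. ennreal ((1/2)^k + 8^k * S k \<omega>)) + ennreal ((1/2)^K + 8^K * R \<omega>) + ennreal c" for \<omega>
  proof -
    have t0: "0 \<le> (1/2::real)^k + 8^k * S k \<omega>" for k using S0[of k \<omega>] by simp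
    have r0: "0 \<le> (1/2::real)^K + 8^K * R \<omega>" using R0[of \<omega>] by simp
    have "Phi n \<psi> K \<omega> = (\<Sum>k\<le>K. (1/2)^k + 8^k * S k \<omega>) + ((1/2)^K + 8^K * R \<omega>) + c"
      by (simp add: Phi_def S_def R_def c_def)
    then show ?thesis using t0 r0 c0
      by (simp add: ennreal_plus[symmetric] sum_ennreal sum_nonneg del: ennreal_plus)
  qed
  have Tm: "(\<lambda>\<omega>. ennreal ((1/2)^k + 8^k * S k \<omega>)) \<in> borel_measurable M" for k using Sm by measurable
  have Rm': "(\<lambda>\<omega>. ennreal ((1/2)^K + 8^K * R \<omega>)) \<in> borel_measurable M" using Rm by measurable
  have eq: "(\<integral>\<^sup>+\<omega>. ennreal (Phi n \<psi> K \<omega>) \<partial>M) = (\<Sum>k\<le>K. \<integral>\<^sup>+\<omega>. ennreal ((1/2)^k + 8^k * S k \<omega>) \<partial>M) + (\<integral>\<^sup>+\<omega>. ennreal ((1/2)^K + 8^K * R \<omega>) \<partial>M) + ennreal c"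
  proof -
    have "(\<integral>\<^sup>+\<omega>. ennreal (Phi n \<psi> K \<omega>) \<partial>M) = (\<integral>\<^sup>+\<omega>. (\<Sum>k\<le>K. ennreal ((1/2)^k + 8^k * S k \<omega>)) + ennreal ((1/2)^K + 8^K * R \<omega>) + ennreal c \<partial>M)"
      by (simp only: pw)
    also have "\<dots> = (\<integral>\<^sup>+\<omega>. (\<Sum>k\<le>K. ennreal ((1/2)^k + 8^k * S k \<omega>)) + ennreal ((1/2)^K + 8^K * R \<omega>) \<partial>M) + (\<integral>\<^sup>+\<omega>. ennreal c \<partial>M)"
      by (rule nn_integral_add) (use Tm Rm' in auto)
    also have "(\<integral>\<^sup>+\<omega>. (\<Sum>k\<le>K. ennreal ((1/2)^k + 8^k * S k \<omega>)) + ennreal ((1/2)^K + 8^K * R \<omega>) \<partial>M)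
       = (\<integral>\<^sup>+\<omega>. (\<Sum>k\<le>K. ennreal ((1/2)^k + 8^k * S k \<omega>)) \<partial>M) + (\<integral>\<^sup>+\<omega>. ennreal ((1/2)^K + 8^K * R \<omega>) \<partial>M)"
      by (rule nn_integral_add) (use Tm Rm' in auto)
    also have "(\<integral>\<^sup>+\<omega>. (\<Sum>k\<le>K. ennreal ((1/2)^k + 8^k * S k \<omega>)) \<partial>M) = (\<Sum>k\<le>K. \<integral>\<^sup>+\<omega>. ennreal ((1/2)^k + 8^k * S k \<omega>) \<partial>M)"
      by (rule nn_integral_sum) (use Tm in auto)
    also have "(\<integral>\<^sup>+\<omega>. ennreal c \<partial>M) = ennreal c" by (simp add: emeasure_space_1)
    finally show ?thesis .
  qed
  have A: "(\<Sum>k\<le>K. \<integral>\<^sup>+\<omega>. ennreal ((1/2)^k + 8^k * S k \<omega>) \<partial>M) \<le> ennreal (2 * (1 + 512*K0))"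
  proof -
    have "(\<Sum>k\<le>K. \<integral>\<^sup>+\<omega>. ennreal ((1/2)^k + 8^k * S k \<omega>) \<partial>M) \<le> (\<Sum>k\<le>K. ennreal ((1/2)^k * (1 + 512*K0)))"
      by (rule sum_mono) (rule T)
    also have "(\<Sum>k\<le>K. ennreal ((1/2)^k * (1 + 512*K0))) = ennreal ((\<Sum>k\<le>K. (1/2)^k) * (1 + 512*K0))"
      using K0_nonneg by (simp add: sum_ennreal sum_distrib_right)
    also have "\<dots> \<le> ennreal (2 * (1 + 512*K0))"
    proof (rule ennreal_leI)
      have "(\<Sum>k\<le>K. (1/2::real)^k) \<le> 2" unfolding geo_half by simp
      then show "(\<Sum>k\<le>K. (1/2::real)^k) * (1 + 512*K0) \<le> 2 * (1 + 512*K0)"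
        by (rule mult_right_mono) (use K0_nonneg in simp)
    qed
    finally show ?thesis .
  qed
  have "(\<integral>\<^sup>+\<omega>. ennreal (Phi n \<psi> K \<omega>) \<partial>M) \<le> ennreal (2 * (1 + 512*K0)) + ennreal (1 + 512*K0) + ennreal c"
    unfolding eq by (intro add_mono A Rb order_refl)
  also have "\<dots> = ennreal (2*(1+512*K0) + (1 + 512*K0) + 2 * sqrt n / 16^K)"
    using K0_nonneg c0 by (simp add: ennreal_plus[symmetric] c_def del: ennreal_plus)
  finally show ?thesis .
qed

end

context chainset begin

lemma Phi_meas: assumes pm: "\<psi> \<in> borel_measurable borel" shows "Phi n \<psi> K \<in> borel_measurable M"
proof -
  have a: "(\<lambda>\<omega>. \<Sum>i\<in>II k. (emp_proc P Y n (dd \<psi> k i) \<omega>)^4) \<in> borel_measurable M" for k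
    by (rule S_meas) (rule dd_meas[OF pm])
  have b: "(\<lambda>\<omega>. \<Sum>j\<in>II K. (emp_proc P Y n (br K j) \<omega>)^4) \<in> borel_measurable M"
    by (rule S_meas) (rule br_meas)
  show ?thesis unfolding Phi_def[abs_def]
    by (intro borel_measurable_add borel_measurable_sum borel_measurable_times borel_measurable_const a b)
qed

lemma Phi_nonneg:
  assumes n: "n > 0" and pm: "\<psi> \<in> borel_measurable borel" and p: "\<And>z. \<bar>\<psi> z\<bar> \<le> 1"
  shows "0 \<le> Phi n \<psi> K \<omega>"
  using pointwise[OF n pm p order_refl, where K=K and \<omega>=\<omega>] by linarith

lemma main_bound:
  assumes n: "n > 0" and gm: "g \<in> borel_measurable borel" and gb: "\<And>z. \<bar>g z\<bar> \<le> 1"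
  shows "\<bar>emp_proc P Y n (H_g w g x) \<omega>\<bar> \<le> Phi n g K \<omega> + Phi n (\<lambda>_. 1) K \<omega>"
proof (cases "w x = 0")
  case True
  have "H_g w g x = (\<lambda>z. 0)" by (rule ext) (simp add: H_g_def acc_alpha_def True)
  then have "emp_proc P Y n (H_g w g x) \<omega> = 0" by (simp add: emp_proc_def)
  then show ?thesis using Phi_nonneg[OF n gm gb] Phi_nonneg[OF n, of "\<lambda>_. 1"] by (simp add: add_nonneg_nonneg)
next
  case False
  then have wx: "0 < w x" using w_nonneg[of x] by simp
  define u where "u = 1 / w x"
  have u0: "0 \<le> u" using wx by (simp add: u_def)
  have one: "(\<lambda>_. 1::real) \<in> borel_measurable borel" "\<And>z::'a. \<bar>(\<lambda>_. 1::real) z\<bar> \<le> 1" by simp_all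
  have He: "H_g w g x = (\<lambda>z. 1 * hh g u z + (- g x) * hh (\<lambda>_. 1) u z)"
    by (rule ext) (simp add: H_g_def acc_alpha_def hh_def mm_def u_def algebra_simps)
  have "emp_proc P Y n (H_g w g x) \<omega> = 1 * emp_proc P Y n (hh g u) \<omega> + (- g x) * emp_proc P Y n (hh (\<lambda>_. 1) u) \<omega>"
    unfolding He by (rule G_lin[of "hh g u" 1 "hh (\<lambda>_. 1) u" 1]) (use gm hh_abs[OF gb u0] hh_abs[OF one(2) u0] in auto)
  then have "\<bar>emp_proc P Y n (H_g w g x) \<omega>\<bar> \<le> \<bar>emp_proc P Y n (hh g u) \<omega>\<bar> + \<bar>g x\<bar> * \<bar>emp_proc P Y n (hh (\<lambda>_. 1) u) \<omega>\<bar>"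
  proof -
    assume e: "emp_proc P Y n (H_g w g x) \<omega> = 1 * emp_proc P Y n (hh g u) \<omega> + (- g x) * emp_proc P Y n (hh (\<lambda>_. 1) u) \<omega>"
    have "\<bar>(- g x) * emp_proc P Y n (hh (\<lambda>_. 1) u) \<omega>\<bar> = \<bar>g x\<bar> * \<bar>emp_proc P Y n (hh (\<lambda>_. 1) u) \<omega>\<bar>"
      by (simp add: abs_mult)
    then show ?thesis unfolding e using abs_triangle_ineq[of "1 * emp_proc P Y n (hh g u) \<omega>" "(- g x) * emp_proc P Y n (hh (\<lambda>_. 1) u) \<omega>"]
      by simp
  qed
  also have "\<dots> \<le> \<bar>emp_proc P Y n (hh g u) \<omega>\<bar> + 1 * \<bar>emp_proc P Y n (hh (\<lambda>_. 1) u) \<omega>\<bar>"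
    by (intro add_left_mono mult_right_mono gb) simp
  also have "\<dots> \<le> Phi n g K \<omega> + Phi n (\<lambda>_. 1) K \<omega>"
    using pointwise[OF n gm gb u0, where K=K and \<omega>=\<omega>] pointwise[OF n one u0, where K=K and \<omega>=\<omega>] by simp
  finally show ?thesis .
qed

end

theorem lemma2:
  fixes \<mu> :: "'a::polish_space measure"
    and p q :: "'a \<Rightarrow> real"
    and M :: "'o measure"
    and Y :: "nat \<Rightarrow> 'o \<Rightarrow> 'a"
    and y0 :: 'a
    and C :: real
    and g :: "'a \<Rightarrow> real"
  assumes sets_mu: "sets \<mu> = sets borel"
    and sf: "sigma_finite_measure \<mu>"
    and p_meas: "p \<in> borel_measurable borel" and p_nonneg: "\<And>x. p x \<ge> 0"
    and q_meas: "q \<in> borel_measurable borel" and q_nonneg: "\<And>x. q x \<ge> 0"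
    and pi_prob: "prob_space (density \<mu> (\<lambda>x. ennreal (p x)))"
    and piY_prob: "prob_space (density \<mu> (\<lambda>x. ennreal (q x)))"
    and w_bdd: "\<exists>B. \<forall>x. \<bar>weight p q x\<bar> \<le> B"
    and M_prob: "prob_space M"
    and Y_meas: "\<And>n. Y n \<in> measurable M borel"
    and Y0: "\<And>\<omega>. \<omega> \<in> space M \<Longrightarrow> Y 0 \<omega> = y0"
    and tail: "\<And>f n x. f \<in> borel_measurable borel \<Longrightarrow> (\<forall>z. \<bar>f z\<bar> \<le> 1) \<Longrightarrow> x > 0 \<Longrightarrow>
        measure M {\<omega> \<in> space M. \<bar>emp_proc (density \<mu> (\<lambda>x. ennreal (q x))) Y n f \<omega>\<bar> > x}
        \<le> (let s = (\<integral>z. (f z)\<^sup>2 \<partial>(density \<mu> (\<lambda>x. ennreal (q x))))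
           in if s = 0 then 0 else C * exp (- (x\<^sup>2 / (C * s))))"
    and w_cont: "continuous_on UNIV (weight p q)"
    and phi_bdd: "\<exists>B. \<forall>x. measure (density \<mu> (\<lambda>x. ennreal (q x)))
                              {z. weight p q z \<le> weight p q x} \<le> B * (weight p q x)\<^sup>2"
    and g_cont: "continuous_on UNIV g"
    and g_bdd: "\<And>x. \<bar>g x\<bar> \<le> 1"
  shows "\<exists>K::real. \<forall>n. (\<integral>\<^sup>+ \<omega>. (SUP x. ennreal \<bar>emp_proc (density \<mu> (\<lambda>x. ennreal (q x))) Y n
                (H_g (weight p q) g x) \<omega>\<bar>) \<partial>M) \<le> ennreal K"
proof -
  define Pm where "Pm = density \<mu> (\<lambda>x. ennreal (q x))"
  define C1 where "C1 = max 1 C"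
  obtain Bw where Bw: "\<And>x. \<bar>weight p q x\<bar> \<le> Bw" using w_bdd by blast
  have C1: "1 \<le> C1" by (simp add: C1_def)
  have wnn: "0 \<le> weight p q x" for x unfolding weight_def using p_nonneg q_nonneg by simp
  have tail': "measure M {\<omega>\<in>space M. \<bar>emp_proc Pm Y n f \<omega>\<bar> > x} \<le> C1 * exp (-(x\<^sup>2/(C1*\<sigma>)))"
    if fm: "f \<in> borel_measurable borel" and fb: "\<forall>z. \<bar>f z\<bar> \<le> 1" and x0: "x > 0" and s0: "\<sigma> > 0"
      and fs: "(\<integral>z. (f z)\<^sup>2 \<partial>Pm) \<le> \<sigma>" for f n x \<sigma>
  proof -
    define s where "s = (\<integral>z. (f z)\<^sup>2 \<partial>Pm)"
    have sn: "0 \<le> s" unfolding s_def by (rule integral_nonneg_AE) simp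
    have t: "measure M {\<omega>\<in>space M. \<bar>emp_proc Pm Y n f \<omega>\<bar> > x} \<le> (if s = 0 then 0 else C * exp (- (x\<^sup>2 / (C * s))))"
      using tail[OF fm fb x0] unfolding Pm_def s_def Let_def by simp
    have "(if s = 0 then 0 else C * exp (- (x\<^sup>2 / (C * s)))) \<le> C1 * exp (-(x\<^sup>2/(C1*\<sigma>)))"
    proof (cases "s = 0")
      case True then show ?thesis using C1 by simp
    next
      case False
      then have sp: "0 < s" using sn by simp
      show ?thesis
      proof (cases "C \<le> 0")
        case True
        then have "C * exp (- (x\<^sup>2 / (C * s))) \<le> 0" by (simp add: mult_nonpos_nonneg)
        moreover have "0 \<le> C1 * exp (-(x\<^sup>2/(C1*\<sigma>)))" using C1 by simp
        ultimately show ?thesis using False by simp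
      next
        case False
        then have Cp: "0 < C" by simp
        have CC: "C \<le> C1" by (simp add: C1_def)
        have "C * s \<le> C1 * \<sigma>" using fs CC sp Cp C1 unfolding s_def[symmetric]
          by (intro mult_mono) auto
        then have "x\<^sup>2 / (C1 * \<sigma>) \<le> x\<^sup>2 / (C * s)"
          by (intro divide_left_mono) (use Cp sp s0 C1 in auto)
        then have "exp (- (x\<^sup>2 / (C * s))) \<le> exp (-(x\<^sup>2/(C1*\<sigma>)))" by simp
        then have "C * exp (- (x\<^sup>2 / (C * s))) \<le> C1 * exp (-(x\<^sup>2/(C1*\<sigma>)))"
          by (intro mult_mono CC) (use Cp C1 in auto)
        then show ?thesis using \<open>s \<noteq> 0\<close> by simp
      qed
    qed
    then show ?thesis using t by linarith
  qed
  interpret chainset Pm M Y "weight p q" C1 Bw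
  proof (rule chainset.intro)
    show "prob_space Pm" using piY_prob by (simp add: Pm_def)
    show "sets Pm = sets borel" using sets_mu by (simp add: Pm_def)
    show "prob_space M" by (rule M_prob)
    show "Y n \<in> borel_measurable M" for n by (rule Y_meas)
    show "weight p q \<in> borel_measurable borel" unfolding weight_def[abs_def] using p_meas q_meas by measurable
    show "0 \<le> weight p q x" for x by (rule wnn)
    show "weight p q x \<le> Bw" for x using Bw[of x] by simp
    show "1 \<le> C1" by (rule C1)
  qed (rule tail')
  have gm: "g \<in> borel_measurable borel" by (rule borel_measurable_continuous_onI[OF g_cont])
  define KK where "KK = 2 * (2*(1+512*K0) + (1 + 512*K0) + 2)"
  have "(\<integral>\<^sup>+ \<omega>. (SUP x. ennreal \<bar>emp_proc Pm Y n (H_g (weight p q) g x) \<omega>\<bar>) \<partial>M) \<le> ennreal KK" for n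
  proof (cases "n = 0")
    case True
    then show ?thesis by (simp add: emp_proc_def)
  next
    case False
    then have n: "n > 0" by simp
    have one: "(\<lambda>_. 1::real) \<in> borel_measurable borel" "\<And>z::'a. \<bar>(\<lambda>_. 1::real) z\<bar> \<le> 1" by simp_all
    have "(\<integral>\<^sup>+ \<omega>. (SUP x. ennreal \<bar>emp_proc Pm Y n (H_g (weight p q) g x) \<omega>\<bar>) \<partial>M)
        \<le> (\<integral>\<^sup>+ \<omega>. ennreal (Phi n g n \<omega>) + ennreal (Phi n (\<lambda>_. 1) n \<omega>) \<partial>M)"
    proof (rule nn_integral_mono)
      fix \<omega> assume "\<omega> \<in> space M"
      show "(SUP x. ennreal \<bar>emp_proc Pm Y n (H_g (weight p q) g x) \<omega>\<bar>) \<le> ennreal (Phi n g n \<omega>) + ennreal (Phi n (\<lambda>_. 1) n \<omega>)"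
      proof (rule SUP_least)
        fix x
        have "ennreal \<bar>emp_proc Pm Y n (H_g (weight p q) g x) \<omega>\<bar> \<le> ennreal (Phi n g n \<omega> + Phi n (\<lambda>_. 1) n \<omega>)"
          by (rule ennreal_leI) (rule main_bound[OF n gm g_bdd])
        also have "\<dots> = ennreal (Phi n g n \<omega>) + ennreal (Phi n (\<lambda>_. 1) n \<omega>)"
          by (rule ennreal_plus) (use Phi_nonneg[OF n gm g_bdd] Phi_nonneg[OF n one] in auto)
        finally show "ennreal \<bar>emp_proc Pm Y n (H_g (weight p q) g x) \<omega>\<bar> \<le> ennreal (Phi n g n \<omega>) + ennreal (Phi n (\<lambda>_. 1) n \<omega>)" .
      qed
    qed
    also have "\<dots> = (\<integral>\<^sup>+ \<omega>. ennreal (Phi n g n \<omega>) \<partial>M) + (\<integral>\<^sup>+ \<omega>. ennreal (Phi n (\<lambda>_. 1) n \<omega>) \<partial>M)"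
      by (rule nn_integral_add) (use Phi_meas[OF gm] Phi_meas[OF one(1)] in auto)
    also have "\<dots> \<le> ennreal (2*(1+512*K0) + (1 + 512*K0) + 2 * sqrt n / 16^n) + ennreal (2*(1+512*K0) + (1 + 512*K0) + 2 * sqrt n / 16^n)"
      by (intro add_mono E_Phi gm g_bdd one)
    also have "\<dots> \<le> ennreal KK"
    proof -
      have sq: "sqrt (real n) \<le> 16^n"
      proof -
        have "real n \<le> real n * real n" using n by (simp add: mult_le_cancel_left1)
        then have "sqrt (real n) \<le> sqrt (real n * real n)" by (rule real_sqrt_le_mono)
        also have "\<dots> = real n" by simp
        finally have "sqrt (real n) \<le> real n" .
        also have "real n \<le> 2^n" using less_exp[of n] by simp
        also have "(2::real)^n \<le> 16^n" by (rule power_mono) auto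
        finally show ?thesis .
      qed
      have "2 * sqrt n / 16^n \<le> (2::real)" using sq by (simp add: field_simps)
      then have "(2*(1+512*K0) + (1 + 512*K0) + 2 * sqrt n / 16^n) + (2*(1+512*K0) + (1 + 512*K0) + 2 * sqrt n / 16^n) \<le> KK"
        unfolding KK_def by simp
      moreover have "0 \<le> 2*(1+512*K0) + (1 + 512*K0) + 2 * sqrt n / 16^n" using K0_nonneg by simp
      ultimately show ?thesis by (simp add: ennreal_plus[symmetric] del: ennreal_plus)
    qed
    finally show ?thesis .
  qed
  then show ?thesis unfolding Pm_def by blast
qed

end
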